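(* Let $G=(V,E)$ be an $n$-node graph with maximum degree at most $\Delta$ and exact maximum degree $\Delta^*\le\Delta$, and let $S\subseteq V$ be a node set in which every node has degree at least $\delta_S$. For every $\varepsilon>0$ there is a deterministic LOCAL algorithm with round complexity $T_{AM}(\varepsilon)$ that computes a matching of $G$ hitting at least a $(1-\varepsilon)\cdot\frac{\delta_S}{\Delta^*+1}$-fraction of the nodes in $S$.
   Context: LOCAL model: synchronous rounds on the $n$-node network graph, unique $O(\log n)$-bit identifiers, unbounded message size and local computation; each node knows whether it belongs to $S$. A matching hits a node if the node is an endpoint of one of its edges. $T_{AM}(\varepsilon)$ denotes the round complexity of a deterministic LOCAL algorithm that, on any $n$-node graph of maximum degree at most $\Delta$ with positive edge weights whose ratio of maximum to minimum weight is $n^{O(1)}$, computes a matching which is maximal and whose weight is at least $(1-\varepsilon)$ times the weight of a maximum-weight matching. *)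

theory Defs
  imports Main "HOL.Real"
begin

text \<open>Network graphs: nodes are identified with their (unique) identifiers.\<close>
record lgraph =
  verts :: "nat set"
  adj :: "nat \<Rightarrow> nat \<Rightarrow> bool"

definition deg :: "lgraph \<Rightarrow> nat \<Rightarrow> nat" where
  "deg G v = card {u. adj G v u}"

definition maxdeg :: "lgraph \<Rightarrow> nat" where
  "maxdeg G = Max (insert 0 (deg G ` verts G))"

definition wf_graph :: "nat \<Rightarrow> nat \<Rightarrow> nat \<Rightarrow> lgraph \<Rightarrow> bool" where
  "wf_graph n \<Delta> N G \<longleftrightarrow>
     finite (verts G) \<and> card (verts G) = n \<and> verts G \<subseteq> {..<N} \<and>
     (\<forall>u x. adj G u x \<longrightarrow> u \<in> verts G \<and> x \<in> verts G \<and> u \<noteq> x \<and> adj G x u) \<and>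
     (\<forall>v\<in>verts G. deg G v \<le> \<Delta>)"

inductive reach :: "lgraph \<Rightarrow> nat \<Rightarrow> nat \<Rightarrow> nat \<Rightarrow> bool" for G where
  refl: "v \<in> verts G \<Longrightarrow> reach G 0 v v"
| mono: "reach G k v u \<Longrightarrow> reach G (Suc k) v u"
| step: "reach G k v u \<Longrightarrow> adj G u x \<Longrightarrow> x \<in> verts G \<Longrightarrow> reach G (Suc k) v x"

definition ball :: "lgraph \<Rightarrow> nat \<Rightarrow> nat \<Rightarrow> nat set" where
  "ball G T v = {u. reach G T v u}"

definition same_view :: "nat \<Rightarrow> lgraph \<Rightarrow> lgraph \<Rightarrow> nat \<Rightarrow> bool" where
  "same_view T G H v \<longleftrightarrow> ball G T v = ball H T v \<and>
     (\<forall>u\<in>ball G T v. \<forall>x\<in>ball G T v. adj G u x = adj H u x)"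

definition same_wview :: "nat \<Rightarrow> lgraph \<Rightarrow> (nat \<Rightarrow> nat \<Rightarrow> real) \<Rightarrow> lgraph \<Rightarrow> (nat \<Rightarrow> nat \<Rightarrow> real) \<Rightarrow> nat \<Rightarrow> bool" where
  "same_wview T G w H w' v \<longleftrightarrow> same_view T G H v \<and>
     (\<forall>u\<in>ball G T v. \<forall>x\<in>ball G T v. adj G u x \<longrightarrow> w u x = w' u x)"

definition same_sview :: "nat \<Rightarrow> lgraph \<Rightarrow> nat set \<Rightarrow> lgraph \<Rightarrow> nat set \<Rightarrow> nat \<Rightarrow> bool" where
  "same_sview T G S H S' v \<longleftrightarrow> same_view T G H v \<and>
     (\<forall>u\<in>ball G T v. u \<in> S \<longleftrightarrow> u \<in> S')"

definition wf_weights :: "nat \<Rightarrow> nat \<Rightarrow> lgraph \<Rightarrow> (nat \<Rightarrow> nat \<Rightarrow> real) \<Rightarrow> bool" where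
  "wf_weights n c G w \<longleftrightarrow>
     (\<forall>u x. adj G u x \<longrightarrow> w u x > 0 \<and> w u x = w x u) \<and>
     (\<forall>u x y z. adj G u x \<longrightarrow> adj G y z \<longrightarrow> w u x \<le> real n ^ c * w y z)"

definition matching_out :: "lgraph \<Rightarrow> (nat \<Rightarrow> nat option) \<Rightarrow> bool" where
  "matching_out G M \<longleftrightarrow>
     (\<forall>u\<in>verts G. \<forall>x. M u = Some x \<longrightarrow> adj G u x \<and> M x = Some u)"

definition maximal_out :: "lgraph \<Rightarrow> (nat \<Rightarrow> nat option) \<Rightarrow> bool" where
  "maximal_out G M \<longleftrightarrow> (\<forall>u x. adj G u x \<longrightarrow> M u \<noteq> None \<or> M x \<noteq> None)"

text \<open>Weight of a matching (every edge is counted from both endpoints, hence /2).\<close>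
definition mweight :: "lgraph \<Rightarrow> (nat \<Rightarrow> nat \<Rightarrow> real) \<Rightarrow> (nat \<Rightarrow> nat option) \<Rightarrow> real" where
  "mweight G w M = (\<Sum>u\<in>verts G. case M u of None \<Rightarrow> 0 | Some x \<Rightarrow> w u x) / 2"

text \<open>T-round deterministic LOCAL algorithm on weighted graphs (output of v depends
  only on its radius-T view).\<close>
definition local_w_alg :: "nat \<Rightarrow> nat \<Rightarrow> nat \<Rightarrow> nat \<Rightarrow> nat \<Rightarrow>
    (lgraph \<Rightarrow> (nat \<Rightarrow> nat \<Rightarrow> real) \<Rightarrow> nat \<Rightarrow> nat option) \<Rightarrow> bool" where
  "local_w_alg n \<Delta> N c T A \<longleftrightarrow>
     (\<forall>G w H w' v. wf_graph n \<Delta> N G \<and> wf_weights n c G w \<and> wf_graph n \<Delta> N H \<and>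
        wf_weights n c H w' \<and> v \<in> verts G \<and> same_wview T G w H w' v \<longrightarrow> A G w v = A H w' v)"

definition local_s_alg :: "nat \<Rightarrow> nat \<Rightarrow> nat \<Rightarrow> nat \<Rightarrow>
    (lgraph \<Rightarrow> nat set \<Rightarrow> nat \<Rightarrow> nat option) \<Rightarrow> bool" where
  "local_s_alg n \<Delta> N T B \<longleftrightarrow>
     (\<forall>G S H S' v. wf_graph n \<Delta> N G \<and> S \<subseteq> verts G \<and> wf_graph n \<Delta> N H \<and> S' \<subseteq> verts H \<and>
        v \<in> verts G \<and> same_sview T G S H S' v \<longrightarrow> B G S v = B H S' v)"

definition AM_algorithm :: "nat \<Rightarrow> nat \<Rightarrow> nat \<Rightarrow> nat \<Rightarrow> real \<Rightarrow> nat \<Rightarrow>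
    (lgraph \<Rightarrow> (nat \<Rightarrow> nat \<Rightarrow> real) \<Rightarrow> nat \<Rightarrow> nat option) \<Rightarrow> bool" where
  "AM_algorithm n \<Delta> N c \<epsilon> T A \<longleftrightarrow> local_w_alg n \<Delta> N c T A \<and>
     (\<forall>G w. wf_graph n \<Delta> N G \<and> wf_weights n c G w \<longrightarrow>
        matching_out G (A G w) \<and> maximal_out G (A G w) \<and>
        (\<forall>M. matching_out G M \<longrightarrow> mweight G w (A G w) \<ge> (1 - \<epsilon>) * mweight G w M))"

end

theory Submission
  imports Defs
begin

definition proper :: "(nat \<Rightarrow> nat \<Rightarrow> bool) \<Rightarrow> (nat \<Rightarrow> nat \<Rightarrow> nat) \<Rightarrow> nat set \<Rightarrow> bool" where
  "proper E col K \<longleftrightarrow> (\<forall>x y. E x y \<longrightarrow> col x y \<in> K \<and> col x y = col y x) \<and>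
     (\<forall>x y z. E x y \<longrightarrow> E x z \<longrightarrow> y \<noteq> z \<longrightarrow> col x y \<noteq> col x z)"

definition colors :: "(nat \<Rightarrow> nat \<Rightarrow> bool) \<Rightarrow> (nat \<Rightarrow> nat \<Rightarrow> nat) \<Rightarrow> nat \<Rightarrow> nat set" where
  "colors E col x = col x ` {y. E x y}"

definition miss :: "(nat \<Rightarrow> nat \<Rightarrow> bool) \<Rightarrow> (nat \<Rightarrow> nat \<Rightarrow> nat) \<Rightarrow> nat set \<Rightarrow> nat \<Rightarrow> nat set" where
  "miss E col K x = K - colors E col x"

definition sw :: "nat \<Rightarrow> nat \<Rightarrow> nat \<Rightarrow> nat" where
  "sw i j a = (if a = i then j else if a = j then i else a)"

lemma sw_inj: "inj (sw i j)"
  unfolding sw_def inj_def by auto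

lemma sw_sw[simp]: "sw i j (sw i j a) = a"
  unfolding sw_def by auto

lemma sw_image_K: "i \<in> K \<Longrightarrow> j \<in> K \<Longrightarrow> sw i j ` K = K"
  unfolding sw_def by (auto simp: image_def)

lemma sw_in: "a \<in> K \<Longrightarrow> i \<in> K \<Longrightarrow> j \<in> K \<Longrightarrow> sw i j a \<in> K"
  unfolding sw_def by simp

lemma proper_unique: "proper E col K \<Longrightarrow> E x y \<Longrightarrow> E x z \<Longrightarrow> col x y = col x z \<Longrightarrow> y = z"
  unfolding proper_def by blast

lemma path_closed:
  fixes E :: "nat \<Rightarrow> nat \<Rightarrow> bool"
  assumes fin: "finite V" and inV: "\<And>x y. E x y \<Longrightarrow> y \<in> V"
    and pr: "proper E col K" and symE: "\<And>x y. E x y \<Longrightarrow> E y x" and ij: "i \<noteq> j"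
    and ui: "\<And>y. E u y \<Longrightarrow> col u y \<noteq> i"
  shows "\<exists>C l. u \<in> C \<and> l \<in> C \<and> (\<forall>x\<in>C. \<forall>y. E x y \<and> col x y \<in> {i,j} \<longrightarrow> y \<in> C) \<and>
     (\<forall>x\<in>C. x \<noteq> u \<longrightarrow> x \<noteq> l \<longrightarrow> i \<in> colors E col x \<and> j \<in> colors E col x)"
proof -
  define hn where "hn x = {y. E x y \<and> col x y \<in> {i,j}}" for x
  define inv where "inv C l \<longleftrightarrow> u \<in> C \<and> l \<in> C \<and> C \<subseteq> insert u V \<and>
     (\<forall>x\<in>C. x \<noteq> l \<longrightarrow> hn x \<subseteq> C) \<and>
     (\<forall>x\<in>C. x \<noteq> u \<longrightarrow> x \<noteq> l \<longrightarrow> i \<in> colors E col x \<and> j \<in> colors E col x) \<and>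
     (l \<noteq> u \<longrightarrow> (\<exists>p\<in>C. p \<noteq> l \<and> p \<in> hn l))" for C l
  have main: "\<forall>C l. card (V - C) = m \<longrightarrow> inv C l \<longrightarrow> (\<exists>C l. u \<in> C \<and> l \<in> C \<and> (\<forall>x\<in>C. hn x \<subseteq> C) \<and>
     (\<forall>x\<in>C. x \<noteq> u \<longrightarrow> x \<noteq> l \<longrightarrow> i \<in> colors E col x \<and> j \<in> colors E col x))" for m
  proof (induction m rule: less_induct)
    case (less m)
    show ?case
    proof (intro allI impI)
      fix C l assume cm: "card (V - C) = m" and iv: "inv C l"
      show "\<exists>C l. u \<in> C \<and> l \<in> C \<and> (\<forall>x\<in>C. hn x \<subseteq> C) \<and>
     (\<forall>x\<in>C. x \<noteq> u \<longrightarrow> x \<noteq> l \<longrightarrow> i \<in> colors E col x \<and> j \<in> colors E col x)"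
      proof (cases "hn l \<subseteq> C")
        case True
        then show ?thesis using iv unfolding inv_def by metis
      next
        case False
        then obtain y where yh: "y \<in> hn l" and yC: "y \<notin> C" by blast
        have yV: "y \<in> V" using yh inV unfolding hn_def by blast
        have lt: "card (V - insert y C) < m"
          using cm yV yC fin by (metis Diff_iff Diff_insert card_Diff1_less finite_Diff)
        have "inv (insert y C) y"
        proof -
          have A: "hn l \<subseteq> insert y C"
          proof (cases "l = u")
            case True
            show ?thesis
            proof
              fix q assume q: "q \<in> hn l"
              have "col u q = j" "col u y = j" using q yh ui True unfolding hn_def by auto
              then have "q = y" using proper_unique[OF pr] q yh True unfolding hn_def by auto
              then show "q \<in> insert y C" by simp
            qed
          next
            case False
            then obtain p where p: "p \<in> C" "p \<noteq> l" "p \<in> hn l" using iv unfolding inv_def by blast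
            have py: "p \<noteq> y" using p yC by auto
            have cne: "col l p \<noteq> col l y" using pr p yh py unfolding proper_def hn_def by auto
            show ?thesis
            proof
              fix q assume q: "q \<in> hn l"
              have "col l q = col l p \<or> col l q = col l y" using q p yh cne unfolding hn_def by auto
              then have "q = p \<or> q = y" using proper_unique[OF pr] q yh p unfolding hn_def by auto
              then show "q \<in> insert y C" using p by auto
            qed
          qed
          have B: "l \<noteq> u \<Longrightarrow> i \<in> colors E col l \<and> j \<in> colors E col l"
          proof -
            assume lu: "l \<noteq> u"
            then obtain p where p: "p \<in> C" "p \<noteq> l" "p \<in> hn l" using iv unfolding inv_def by blast
            have py: "p \<noteq> y" using p yC by auto
            have cne: "col l p \<noteq> col l y" using pr p yh py unfolding proper_def hn_def by auto
            have "{col l p, col l y} = {i,j}" using cne p yh unfolding hn_def by auto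
            moreover have "{col l p, col l y} \<subseteq> colors E col l" using p yh unfolding hn_def colors_def by auto
            ultimately show ?thesis by auto
          qed
          have Cc: "l \<in> hn y"
          proof -
            have "E l y" "col l y \<in> {i,j}" using yh unfolding hn_def by auto
            then have "E y l" "col y l \<in> {i,j}" using symE pr unfolding proper_def by auto
            then show ?thesis unfolding hn_def by simp
          qed
          have ly: "l \<noteq> y" using iv yC unfolding inv_def by auto
          have iv1: "u \<in> C" "l \<in> C" "C \<subseteq> insert u V"
            and iv2: "\<And>x. x\<in>C \<Longrightarrow> x \<noteq> l \<Longrightarrow> hn x \<subseteq> C"
            and iv3: "\<And>x. x\<in>C \<Longrightarrow> x \<noteq> u \<Longrightarrow> x \<noteq> l \<Longrightarrow> i \<in> colors E col x \<and> j \<in> colors E col x"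
            using iv unfolding inv_def by auto
          have i1: "u \<in> insert y C" "y \<in> insert y C" "insert y C \<subseteq> insert u V"
            using iv1 yV by auto
          have i2: "\<forall>x\<in>insert y C. x \<noteq> y \<longrightarrow> hn x \<subseteq> insert y C"
          proof (intro ballI impI)
            fix x assume "x \<in> insert y C" "x \<noteq> y"
            then have xC: "x \<in> C" by simp
            show "hn x \<subseteq> insert y C"
            proof (cases "x = l")
              case True then show ?thesis using A by simp
            next
              case False then show ?thesis using iv2[OF xC] by blast
            qed
          qed
          have i3: "\<forall>x\<in>insert y C. x \<noteq> u \<longrightarrow> x \<noteq> y \<longrightarrow> i \<in> colors E col x \<and> j \<in> colors E col x"
          proof (intro ballI impI)
            fix x assume "x \<in> insert y C" "x \<noteq> u" "x \<noteq> y"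
            then have xC: "x \<in> C" by simp
            show "i \<in> colors E col x \<and> j \<in> colors E col x"
            proof (cases "x = l")
              case True then show ?thesis using B \<open>x \<noteq> u\<close> by simp
            next
              case False then show ?thesis using iv3[OF xC \<open>x \<noteq> u\<close>] by blast
            qed
          qed
          have i4: "\<exists>p\<in>insert y C. p \<noteq> y \<and> p \<in> hn y"
            using Cc ly iv1 by blast
          have "insert y C \<subseteq> insert u V" using i1 by simp
          then show ?thesis unfolding inv_def using i1(1,2) i2 i3 i4 by (intro conjI) auto
        qed
        then show ?thesis using less.IH[OF lt] by blast
      qed
    qed
  qed
  have "inv {u} u" unfolding inv_def by simp
  from main[rule_format, OF HOL.refl this] obtain C l where "u \<in> C \<and> l \<in> C \<and> (\<forall>x\<in>C. hn x \<subseteq> C) \<and>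
     (\<forall>x\<in>C. x \<noteq> u \<longrightarrow> x \<noteq> l \<longrightarrow> i \<in> colors E col x \<and> j \<in> colors E col x)"
    by blast
  then show ?thesis unfolding hn_def by blast
qed

lemma kempe:
  fixes E :: "nat \<Rightarrow> nat \<Rightarrow> bool"
  assumes fin: "finite V" and inV: "\<And>x y. E x y \<Longrightarrow> y \<in> V"
    and pr: "proper E col K" and symE: "\<And>x y. E x y \<Longrightarrow> E y x" and ij: "i \<noteq> j"
    and iK: "i \<in> K" and jK: "j \<in> K"
    and ui: "i \<in> miss E col K u"
  shows "\<exists>col' z. proper E col' K \<and> miss E col' K u = sw i j ` miss E col K u \<and>
     miss E col' K z = sw i j ` miss E col K z \<and>
     (\<forall>x. x \<noteq> u \<longrightarrow> x \<noteq> z \<longrightarrow> miss E col' K x = miss E col K x)"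
proof -
  have ui': "\<And>y. E u y \<Longrightarrow> col u y \<noteq> i" using ui unfolding miss_def colors_def by auto
  have ex: "\<exists>C l. u \<in> C \<and> l \<in> C \<and> (\<forall>x\<in>C. \<forall>y. E x y \<and> col x y \<in> {i,j} \<longrightarrow> y \<in> C) \<and>
     (\<forall>x\<in>C. x \<noteq> u \<longrightarrow> x \<noteq> l \<longrightarrow> i \<in> colors E col x \<and> j \<in> colors E col x)"
    apply (rule path_closed[where V=V and E=E and col=col and K=K])
    using fin inV pr symE ij ui' by auto
  obtain C l where H: "u \<in> C \<and> l \<in> C \<and> (\<forall>x\<in>C. \<forall>y. E x y \<and> col x y \<in> {i,j} \<longrightarrow> y \<in> C) \<and>
     (\<forall>x\<in>C. x \<noteq> u \<longrightarrow> x \<noteq> l \<longrightarrow> i \<in> colors E col x \<and> j \<in> colors E col x)"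
    using ex by (elim exE) (rule that)
  have C: "u \<in> C" "l \<in> C" and cl: "\<forall>x\<in>C. \<forall>y. E x y \<and> col x y \<in> {i,j} \<longrightarrow> y \<in> C"
    and int: "\<forall>x\<in>C. x \<noteq> u \<longrightarrow> x \<noteq> l \<longrightarrow> i \<in> colors E col x \<and> j \<in> colors E col x"
    using H by simp_all
  define col' where "col' x y = (if x \<in> C then sw i j (col x y) else col x y)" for x y
  have colsym: "\<And>x y. E x y \<Longrightarrow> col x y = col y x" using pr unfolding proper_def by blast
  have swfix: "\<And>a. a \<notin> {i,j} \<Longrightarrow> sw i j a = a" unfolding sw_def by auto
  have col'eq: "\<And>x y. E x y \<Longrightarrow> col' x y = (if x \<in> C \<and> col x y \<in> {i,j} then sw i j (col x y) else col x y)"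
    unfolding col'_def using swfix by auto
  have clos: "\<And>x y. E x y \<Longrightarrow> col x y \<in> {i,j} \<Longrightarrow> x \<in> C \<longleftrightarrow> y \<in> C"
  proof -
    fix x y assume e: "E x y" and c: "col x y \<in> {i,j}"
    have yx: "E y x" using symE[OF e] .
    have cy: "col y x \<in> {i,j}" using c colsym[OF e] by simp
    show "x \<in> C \<longleftrightarrow> y \<in> C" using cl e c yx cy by metis
  qed
  have pr': "proper E col' K"
    unfolding proper_def
  proof (intro conjI allI impI)
    fix x y assume e: "E x y"
    have "col x y \<in> K" using pr e unfolding proper_def by blast
    then show "col' x y \<in> K" unfolding col'_def using sw_in[OF _ iK jK] by simp
    show "col' x y = col' y x"
    proof (cases "col x y \<in> {i,j}")
      case True
      then have "x \<in> C \<longleftrightarrow> y \<in> C" using clos[OF e] by blast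
      moreover have "col y x \<in> {i,j}" using True colsym[OF e] by simp
      ultimately show ?thesis using col'eq[OF e] col'eq[OF symE[OF e]] colsym[OF e] True by simp
    next
      case False
      moreover have "col y x \<notin> {i,j}" using False colsym[OF e] by simp
      ultimately show ?thesis using col'eq[OF e] col'eq[OF symE[OF e]] colsym[OF e] by simp
    qed
  next
    fix x y z assume "E x y" "E x z" "y \<noteq> z"
    then have "col x y \<noteq> col x z" using pr unfolding proper_def by blast
    then show "col' x y \<noteq> col' x z" unfolding col'_def using sw_inj[of i j] by (simp add: inj_eq)
  qed
  have colsC: "\<And>x. x \<in> C \<Longrightarrow> colors E col' x = sw i j ` colors E col x"
  proof -
    fix x assume xC: "x \<in> C"
    have "col' x = sw i j \<circ> col x" using xC by (simp add: col'_def fun_eq_iff)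
    then show "colors E col' x = sw i j ` colors E col x"
      unfolding colors_def by (simp add: image_comp)
  qed
  have colsN: "\<And>x. x \<notin> C \<Longrightarrow> colors E col' x = colors E col x"
  proof -
    fix x assume xC: "x \<notin> C"
    have "col' x = col x" using xC by (simp add: col'_def fun_eq_iff)
    then show "colors E col' x = colors E col x"
      unfolding colors_def by simp
  qed
  have missC: "\<And>x. x \<in> C \<Longrightarrow> miss E col' K x = sw i j ` miss E col K x"
  proof -
    fix x assume "x \<in> C"
    have "sw i j ` (K - colors E col x) = sw i j ` K - sw i j ` colors E col x"
      using sw_inj by (simp add: image_set_diff)
    then show "miss E col' K x = sw i j ` miss E col K x"
      unfolding miss_def using colsC[OF \<open>x \<in> C\<close>] sw_image_K[OF iK jK] by simp
  qed
  have missN: "\<And>x. x \<notin> C \<Longrightarrow> miss E col' K x = miss E col K x"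
    unfolding miss_def using colsN by simp
  have swid: "\<And>A. i \<notin> A \<Longrightarrow> j \<notin> A \<Longrightarrow> sw i j ` A = A"
  proof -
    fix A :: "nat set" assume "i \<notin> A" "j \<notin> A"
    then have "\<And>a. a \<in> A \<Longrightarrow> sw i j a = a" unfolding sw_def by auto
    then show "sw i j ` A = A" by (metis image_cong image_ident)
  qed
  have oth: "\<forall>x. x \<noteq> u \<longrightarrow> x \<noteq> l \<longrightarrow> miss E col' K x = miss E col K x"
  proof (intro allI impI)
    fix x assume xu: "x \<noteq> u" and xl: "x \<noteq> l"
    show "miss E col' K x = miss E col K x"
    proof (cases "x \<in> C")
      case True
      then have "i \<in> colors E col x" "j \<in> colors E col x" using int xu xl by auto
      then have "i \<notin> miss E col K x" "j \<notin> miss E col K x" unfolding miss_def by auto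
      then show ?thesis using missC[OF True] swid by simp
    next
      case False then show ?thesis using missN by simp
    qed
  qed
  show ?thesis using pr' missC[OF C(1)] missC[OF C(2)] oth by blast
qed

lemma card_filter_sum: "finite A \<Longrightarrow> card {a\<in>A. P a} = (\<Sum>a\<in>A. if P a then 1 else (0::nat))"
proof -
  assume fA: "finite A"
  have "card {a\<in>A. P a} = sum (\<lambda>x. 1) {a\<in>A. P a}" by (rule card_eq_sum)
  also have "\<dots> = (\<Sum>a\<in>A. if P a then 1 else (0::nat))" by (rule sum.inter_filter[OF fA])
  finally show ?thesis .
qed

lemma dbl:
  assumes "finite A" "finite K" "\<forall>a\<in>A. F a \<subseteq> K"
  shows "(\<Sum>c\<in>K. card {a\<in>A. c \<in> F a}) = (\<Sum>a\<in>A. card (F a))"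
proof -
  have "(\<Sum>c\<in>K. card {a\<in>A. c \<in> F a}) = (\<Sum>c\<in>K. \<Sum>a\<in>A. if c \<in> F a then 1 else (0::nat))"
    using assms(1) by (simp add: card_filter_sum)
  also have "\<dots> = (\<Sum>a\<in>A. \<Sum>c\<in>K. if c \<in> F a then 1 else (0::nat))"
    by (rule sum.swap)
  also have "\<dots> = (\<Sum>a\<in>A. card (F a))"
  proof (rule sum.cong[OF HOL.refl])
    fix a assume "a \<in> A"
    then have "F a \<subseteq> K" using assms(3) by blast
    then have "{c\<in>K. c \<in> F a} = F a" by blast
    then show "(\<Sum>c\<in>K. if c \<in> F a then 1 else (0::nat)) = card (F a)"
      using card_filter_sum[OF assms(2), of "\<lambda>c. c \<in> F a"] by simp
  qed
  finally show ?thesis .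
qed

lemma odd_sum_ex: "odd (sum f A) \<Longrightarrow> \<exists>a\<in>A. odd (f a :: nat)"
proof (rule ccontr)
  assume "odd (sum f A)" "\<not> (\<exists>a\<in>A. odd (f a))"
  then have "\<forall>a\<in>A. 2 dvd f a" by blast
  then have "2 dvd sum f A" by (simp add: dvd_sum)
  then show False using \<open>odd (sum f A)\<close> by simp
qed

lemma card_swap_elem: "finite X \<Longrightarrow> i \<in> X \<Longrightarrow> j \<notin> X \<Longrightarrow> card (insert j (X - {i})) = card X"
proof -
  assume a: "finite X" "i \<in> X" "j \<notin> X"
  then have "card X > 0" using card_gt_0_iff by blast
  then show ?thesis using a by (simp add: card.insert_remove)
qed

lemma exgood:
  fixes E :: "nat \<Rightarrow> nat \<Rightarrow> bool" and N :: "nat set"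
  assumes fin: "finite V" and inV: "\<And>x y. E x y \<Longrightarrow> y \<in> V"
    and symE: "\<And>x y. E x y \<Longrightarrow> E y x"
    and finK: "finite K" and finN: "finite N" and NK: "card N \<le> card K" and ua: "ua \<in> N"
    and good0: "proper E cola K \<and> (\<forall>u\<in>N. Ma u \<subseteq> miss E cola K u) \<and> card (Ma ua) = 1 \<and>
       (\<forall>u\<in>N-{ua}. card (Ma u) = 2)"
  shows "\<exists>col' M'. (proper E col' K \<and> (\<forall>u\<in>N. M' u \<subseteq> miss E col' K u) \<and> card (M' ua) = 1 \<and>
       (\<forall>u\<in>N-{ua}. card (M' u) = 2)) \<and> (\<exists>c\<in>K. card {u\<in>N. c \<in> M' u} = 1)"
proof -
  define good where "good (col::nat\<Rightarrow>nat\<Rightarrow>nat) (M::nat\<Rightarrow>nat set) \<longleftrightarrow> proper E col K \<and> (\<forall>u\<in>N. M u \<subseteq> miss E col K u) \<and> card (M ua) = 1 \<and>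
       (\<forall>u\<in>N-{ua}. card (M u) = 2)" for col M
  define cnt where "cnt (M::nat\<Rightarrow>nat set) (c::nat) = card {u\<in>N. c \<in> M u}" for M c
  have sumeq: "(\<Sum>c\<in>K. cnt M c) = 2 * card N - 1" if g: "good col M" for col M
  proof -
    have sub: "\<forall>u\<in>N. M u \<subseteq> K" using g unfolding good_def miss_def by blast
    have "(\<Sum>c\<in>K. cnt M c) = (\<Sum>u\<in>N. card (M u))"
      unfolding cnt_def by (rule dbl[OF finN finK sub])
    also have "\<dots> = card (M ua) + (\<Sum>u\<in>N-{ua}. card (M u))"
      using sum.remove[OF finN ua] by simp
    also have "\<dots> = 1 + 2 * card (N - {ua})"
      using g unfolding good_def by simp
    also have "\<dots> = 2 * card N - 1"
      using ua finN card_gt_0_iff[of N] by (auto simp: card_Diff_singleton)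
    finally show ?thesis .
  qed
  have main: "\<forall>col M. good col M \<longrightarrow> (\<exists>i\<in>K. cnt M i = m) \<longrightarrow> odd m \<longrightarrow>
      (\<exists>col' M'. good col' M' \<and> (\<exists>c\<in>K. cnt M' c = 1))" for m
  proof (induction m rule: less_induct)
    case (less m)
    show ?case
    proof (intro allI impI)
      fix col M assume g: "good col M" and ex: "\<exists>i\<in>K. cnt M i = m" and om: "odd m"
      show "\<exists>col' M'. good col' M' \<and> (\<exists>c\<in>K. cnt M' c = 1)"
      proof (cases "\<exists>c\<in>K. cnt M c = 1")
        case True then show ?thesis using g by blast
      next
        case no1: False
        obtain i where iK: "i \<in> K" and ci: "cnt M i = m" using ex by blast
        have "m \<noteq> 1" using no1 iK ci by blast
        then have m3: "m \<ge> 3" using om by presburger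
        have "\<exists>j\<in>K. cnt M j = 0"
        proof (rule ccontr)
          assume "\<not> (\<exists>j\<in>K. cnt M j = 0)"
          then have ge2: "\<forall>c\<in>K - {i}. 2 \<le> cnt M c" using no1 by (metis DiffD1 One_nat_def Suc_1 Suc_leI less_one nat_neq_iff)
          have "(\<Sum>c\<in>K. cnt M c) = cnt M i + (\<Sum>c\<in>K-{i}. cnt M c)"
            using sum.remove[OF finK iK] by simp
          moreover have "card (K - {i}) * 2 \<le> (\<Sum>c\<in>K-{i}. cnt M c)"
            using sum_bounded_below[of "K-{i}" 2 "cnt M"] ge2 by simp
          moreover have "card (K - {i}) = card K - 1" using iK finK by simp
          moreover have "card K \<ge> 1" using iK finK card_gt_0_iff[of K] by auto
          ultimately have "(\<Sum>c\<in>K. cnt M c) \<ge> 2 * card K + 1" using ci m3 by linarith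
          then show False using sumeq[OF g] NK by linarith
        qed
        then obtain j where jK: "j \<in> K" and cj: "cnt M j = 0" by blast
        have ij: "i \<noteq> j" using ci cj m3 by auto
        define T where "T = {u\<in>N. i \<in> M u}"
        have cT: "card T = m" using ci unfolding T_def cnt_def by simp
        have finT: "finite T" using finN unfolding T_def by simp
        have jnot: "\<And>u. u \<in> N \<Longrightarrow> j \<notin> M u"
        proof -
          fix u assume "u \<in> N"
          have "{u\<in>N. j \<in> M u} = {}" using cj finN unfolding cnt_def by simp
          then show "j \<notin> M u" using \<open>u \<in> N\<close> by blast
        qed
        have Msub: "\<And>u. u \<in> N \<Longrightarrow> M u \<subseteq> miss E col K u" using g unfolding good_def by blast
        have finM: "\<And>u. u \<in> N \<Longrightarrow> finite (M u)"
          using Msub finK unfolding miss_def by (meson finite_Diff finite_subset)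
        have prc: "proper E col K" using g unfolding good_def by blast
        obtain u where uT: "u \<in> T" using cT m3 by (metis card.empty ex_in_conv not_numeral_le_zero)
        have uN: "u \<in> N" and iu: "i \<in> M u" using uT unfolding T_def by auto
        show ?thesis
        proof (cases "\<exists>u\<in>T. j \<in> miss E col K u")
          case True
          then obtain w where wT: "w \<in> T" and jw: "j \<in> miss E col K w" by blast
          have wN: "w \<in> N" and iw: "i \<in> M w" using wT unfolding T_def by auto
          define M' where "M' = M(w := insert j (M w - {i}))"
          have "good col M'"
            unfolding good_def
          proof (intro conjI)
            show "proper E col K" by (rule prc)
            show "\<forall>u\<in>N. M' u \<subseteq> miss E col K u" using Msub jw wN unfolding M'_def by auto
            show "card (M' ua) = 1"
              using g card_swap_elem[OF finM[OF wN] iw jnot[OF wN]] unfolding M'_def good_def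
              by (cases "w = ua") auto
            show "\<forall>u\<in>N-{ua}. card (M' u) = 2"
              using g card_swap_elem[OF finM[OF wN] iw jnot[OF wN]] unfolding M'_def good_def
              by auto
          qed
          moreover have "cnt M' j = 1"
          proof -
            have "{u\<in>N. j \<in> M' u} = {w}" using jnot wN unfolding M'_def by auto
            then show ?thesis unfolding cnt_def by simp
          qed
          ultimately show ?thesis using jK by blast
        next
          case False
          then have jnm: "\<And>w. w \<in> T \<Longrightarrow> j \<notin> miss E col K w" by blast
          have ium: "i \<in> miss E col K u" using Msub[OF uN] iu by blast
          have kex: "\<exists>col' z. proper E col' K \<and> miss E col' K u = sw i j ` miss E col K u \<and>
             miss E col' K z = sw i j ` miss E col K z \<and>
             (\<forall>x. x \<noteq> u \<longrightarrow> x \<noteq> z \<longrightarrow> miss E col' K x = miss E col K x)"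
            by (rule kempe[where V=V and E=E and col=col and K=K and i=i and j=j and u=u, OF fin inV prc symE ij iK jK ium])
          obtain col' z where H: "proper E col' K \<and> miss E col' K u = sw i j ` miss E col K u \<and>
             miss E col' K z = sw i j ` miss E col K z \<and>
             (\<forall>x. x \<noteq> u \<longrightarrow> x \<noteq> z \<longrightarrow> miss E col' K x = miss E col K x)"
            using kex by (elim exE) (rule that)
          have pr': "proper E col' K" using H by (rule conjunct1)
          have mu: "miss E col' K u = sw i j ` miss E col K u" using H[THEN conjunct2] by (rule conjunct1)
          have mz: "miss E col' K z = sw i j ` miss E col K z" using H[THEN conjunct2, THEN conjunct2] by (rule conjunct1)
          have mo: "\<forall>x. x \<noteq> u \<longrightarrow> x \<noteq> z \<longrightarrow> miss E col' K x = miss E col K x"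
            using H[THEN conjunct2, THEN conjunct2] by (rule conjunct2)
          define M' where "M' x = (if x = u \<or> (x = z \<and> z \<in> T) then insert j (M x - {i}) else M x)" for x
          have swmem: "\<And>A a. a \<in> A \<Longrightarrow> sw i j a \<in> sw i j ` A" by blast
          have trans_ok: "\<And>w. w \<in> T \<Longrightarrow> insert j (M w - {i}) \<subseteq> sw i j ` miss E col K w"
          proof -
            fix w assume wT: "w \<in> T"
            have wN: "w \<in> N" and iw: "i \<in> M w" using wT unfolding T_def by auto
            have imw: "i \<in> miss E col K w" using Msub[OF wN] iw by blast
            have "j = sw i j i" unfolding sw_def by simp
            then have "j \<in> sw i j ` miss E col K w" using imw by blast
            moreover have "M w - {i} \<subseteq> sw i j ` miss E col K w"
            proof
              fix a assume a: "a \<in> M w - {i}"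
              then have "a \<noteq> j" using jnot[OF wN] by blast
              then have "sw i j a = a" using a unfolding sw_def by auto
              moreover have "a \<in> miss E col K w" using a Msub[OF wN] by blast
              ultimately show "a \<in> sw i j ` miss E col K w" by (metis image_eqI)
            qed
            ultimately show "insert j (M w - {i}) \<subseteq> sw i j ` miss E col K w" by blast
          qed
          have "good col' M'"
            unfolding good_def
          proof (intro conjI)
            show "proper E col' K" by (rule pr')
            show "\<forall>x\<in>N. M' x \<subseteq> miss E col' K x"
            proof
              fix x assume xN: "x \<in> N"
              show "M' x \<subseteq> miss E col' K x"
              proof (cases "x = u")
                case True
                then show ?thesis using trans_ok[OF uT] mu unfolding M'_def by simp
              next
                case xu: False
                show ?thesis
                proof (cases "x = z")
                  case True
                  show ?thesis
                  proof (cases "z \<in> T")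
                    case True
                    then show ?thesis using trans_ok[OF True] mz \<open>x = z\<close> unfolding M'_def by simp
                  next
                    case zT: False
                    have "i \<notin> M x" using zT xN \<open>x = z\<close> unfolding T_def by blast
                    moreover have "j \<notin> M x" using jnot[OF xN] .
                    ultimately have "M x \<subseteq> sw i j ` miss E col K x"
                    proof -
                      assume ni: "i \<notin> M x" and nj: "j \<notin> M x"
                      show ?thesis
                      proof
                        fix a assume a: "a \<in> M x"
                        then have "sw i j a = a" using ni nj unfolding sw_def by auto
                        moreover have "a \<in> miss E col K x" using a Msub[OF xN] by blast
                        ultimately show "a \<in> sw i j ` miss E col K x" by (metis image_eqI)
                      qed
                    qed
                    then show ?thesis using mz zT xu \<open>x = z\<close> unfolding M'_def by simp
                  qed
                next
                  case False
                  then show ?thesis using mo xu Msub[OF xN] unfolding M'_def by simp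
                qed
              qed
            qed
            have cardM': "\<And>x. x \<in> N \<Longrightarrow> card (M' x) = card (M x)"
            proof -
              fix x assume xN: "x \<in> N"
              show "card (M' x) = card (M x)"
              proof (cases "x = u \<or> (x = z \<and> z \<in> T)")
                case True
                then have "x \<in> T" using uT by blast
                then have "i \<in> M x" unfolding T_def by blast
                then show ?thesis using True card_swap_elem[OF finM[OF xN] _ jnot[OF xN]] unfolding M'_def by simp
              next
                case False then show ?thesis unfolding M'_def by auto
              qed
            qed
            show "card (M' ua) = 1" using cardM'[OF ua] g unfolding good_def by simp
            show "\<forall>x\<in>N-{ua}. card (M' x) = 2" using cardM' g unfolding good_def by simp
          qed
          show ?thesis
          proof (cases "z \<noteq> u \<and> z \<in> T")
            case False
            have "{x\<in>N. j \<in> M' x} = {u}"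
            proof
              show "{u} \<subseteq> {x\<in>N. j \<in> M' x}" using uN unfolding M'_def by simp
              show "{x\<in>N. j \<in> M' x} \<subseteq> {u}"
              proof
                fix x assume "x \<in> {x\<in>N. j \<in> M' x}"
                then have xN: "x \<in> N" and jx: "j \<in> M' x" by auto
                show "x \<in> {u}"
                proof (rule ccontr)
                  assume "x \<notin> {u}"
                  then have "M' x = M x" using False unfolding M'_def by auto
                  then show False using jx jnot[OF xN] by simp
                qed
              qed
            qed
            then have "cnt M' j = 1" unfolding cnt_def by simp
            then show ?thesis using \<open>good col' M'\<close> jK by blast
          next
            case True
            have "{x\<in>N. i \<in> M' x} = T - {u, z}"
            proof
              show "{x\<in>N. i \<in> M' x} \<subseteq> T - {u, z}"
                unfolding M'_def T_def using True ij by auto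
              show "T - {u, z} \<subseteq> {x\<in>N. i \<in> M' x}"
                unfolding M'_def T_def using ij by auto
            qed
            moreover have "card (T - {u, z}) = m - 2"
              using True uT finT cT by (simp add: card_Diff_subset)
            ultimately have c2: "cnt M' i = m - 2" unfolding cnt_def by simp
            have "m - 2 < m" using m3 by simp
            moreover have "odd (m - 2)" using om m3 by presburger
            ultimately show ?thesis using less.IH \<open>good col' M'\<close> c2 iK by blast
          qed
        qed
      qed
    qed
  qed
  have "odd (\<Sum>c\<in>K. cnt Ma c)"
  proof -
    have "good cola Ma" using good0 unfolding good_def by blast
    then have "(\<Sum>c\<in>K. cnt Ma c) = 2 * card N - 1" by (rule sumeq)
    moreover have "card N \<ge> 1" using ua finN card_gt_0_iff[of N] by auto
    ultimately show ?thesis by presburger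
  qed
  then obtain i where "i \<in> K" "odd (cnt Ma i)" using odd_sum_ex by blast
  moreover have "good cola Ma" using good0 unfolding good_def by blast
  ultimately obtain col' M' where "good col' M'" "\<exists>c\<in>K. cnt M' c = 1"
    using main by blast
  then show ?thesis unfolding good_def cnt_def by blast
qed

definition rmv :: "(nat \<Rightarrow> nat \<Rightarrow> bool) \<Rightarrow> nat \<Rightarrow> nat \<Rightarrow> nat \<Rightarrow> bool" where
  "rmv E v x y \<longleftrightarrow> E x y \<and> x \<noteq> v \<and> y \<noteq> v"

lemma extend:
  "\<forall>E col K u0. finite V \<longrightarrow> (\<forall>x y. E x y \<longrightarrow> x \<in> V \<and> y \<in> V) \<longrightarrow> (\<forall>x y. E x y \<longrightarrow> E y x) \<longrightarrow>
     (\<forall>x. \<not> E x x) \<longrightarrow> card {u. E v u} = d \<longrightarrow> proper (rmv E v) col K \<longrightarrow> finite K \<longrightarrow> d \<le> card K \<longrightarrow>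
     (\<forall>u. E v u \<longrightarrow> 1 \<le> card (miss (rmv E v) col K u) \<and> (u \<noteq> u0 \<longrightarrow> 2 \<le> card (miss (rmv E v) col K u))) \<longrightarrow>
     (\<exists>col'. proper E col' K)"
proof (induction d)
  case 0
  show ?case
  proof (intro allI impI)
    fix E col K u0
    assume fin: "finite V" and inV: "\<forall>x y. E x y \<longrightarrow> x \<in> V \<and> y \<in> V" and sy: "\<forall>x y. E x y \<longrightarrow> E y x"
      and c0: "card {u. E v u} = 0" and pr: "proper (rmv E v) col K"
    have "{u. E v u} \<subseteq> V" using inV by blast
    then have fN: "finite {u. E v u}" using fin finite_subset by blast
    then have nv: "\<And>u. \<not> E v u" using c0 by simp
    have "rmv E v = E"
    proof (intro ext)
      fix x y
      show "rmv E v x y = E x y"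
        unfolding rmv_def using nv sy by metis
    qed
    then show "\<exists>col'. proper E col' K" using pr by metis
  qed
next
  case (Suc d)
  show ?case
  proof (intro allI impI)
    fix E col K u0
    assume fin: "finite V" and inV: "\<forall>x y. E x y \<longrightarrow> x \<in> V \<and> y \<in> V" and sy: "\<forall>x y. E x y \<longrightarrow> E y x"
      and irr: "\<forall>x. \<not> E x x"
      and cN: "card {u. E v u} = Suc d" and pr: "proper (rmv E v) col K" and finK: "finite K"
      and dK: "Suc d \<le> card K"
      and mis: "\<forall>u. E v u \<longrightarrow> 1 \<le> card (miss (rmv E v) col K u) \<and> (u \<noteq> u0 \<longrightarrow> 2 \<le> card (miss (rmv E v) col K u))"
    define N where "N = {u. E v u}"
    define E0 where "E0 = rmv E v"
    have NV: "N \<subseteq> V" using inV unfolding N_def by blast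
    then have finN: "finite N" using fin finite_subset by blast
    have cN': "card N = Suc d" using cN unfolding N_def .
    then have "N \<noteq> {}" by auto
    then obtain u1 where u1N: "u1 \<in> N" and u1: "u0 \<in> N \<Longrightarrow> u1 = u0" by blast
    have E0V: "\<And>x y. E0 x y \<Longrightarrow> y \<in> V" using inV unfolding E0_def rmv_def by blast
    have E0sym: "\<And>x y. E0 x y \<Longrightarrow> E0 y x" using sy unfolding E0_def rmv_def by blast
    define need where "need u = (if u = u1 then 1 else (2::nat))" for u
    have needle: "\<And>u. u \<in> N \<Longrightarrow> need u \<le> card (miss E0 col K u)"
    proof -
      fix u assume uN: "u \<in> N"
      show "need u \<le> card (miss E0 col K u)"
      proof (cases "u = u1")
        case True then show ?thesis using mis uN unfolding need_def N_def E0_def by simp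
      next
        case False
        then have "u \<noteq> u0" using u1 uN by blast
        then show ?thesis using mis uN False unfolding need_def N_def E0_def by simp
      qed
    qed
    define M0 where "M0 u = (SOME A. A \<subseteq> miss E0 col K u \<and> card A = need u)" for u
    have M0p: "\<And>u. u \<in> N \<Longrightarrow> M0 u \<subseteq> miss E0 col K u \<and> card (M0 u) = need u"
    proof -
      fix u assume uN: "u \<in> N"
      obtain A where "A \<subseteq> miss E0 col K u" "card A = need u"
        using obtain_subset_with_card_n[OF needle[OF uN]] by metis
      then show "M0 u \<subseteq> miss E0 col K u \<and> card (M0 u) = need u"
        unfolding M0_def by (metis (mono_tags, lifting) someI)
    qed
    have good0: "proper E0 col K \<and> (\<forall>u\<in>N. M0 u \<subseteq> miss E0 col K u) \<and> card (M0 u1) = 1 \<and>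
       (\<forall>u\<in>N-{u1}. card (M0 u) = 2)"
      using pr M0p u1N unfolding E0_def need_def by auto
    have NKc: "card N \<le> card K" using cN' dK by simp
    have ex: "\<exists>col' M'. (proper E0 col' K \<and> (\<forall>u\<in>N. M' u \<subseteq> miss E0 col' K u) \<and> card (M' u1) = 1 \<and>
       (\<forall>u\<in>N-{u1}. card (M' u) = 2)) \<and> (\<exists>c\<in>K. card {u\<in>N. c \<in> M' u} = 1)"
      by (rule exgood[where V=V and E=E0 and K=K and N=N and ua=u1 and cola=col and Ma=M0, OF fin E0V E0sym finK finN NKc u1N good0])
    then obtain col' M' c where pr': "proper E0 col' K" and M'm: "\<forall>u\<in>N. M' u \<subseteq> miss E0 col' K u"
      and M'u1: "card (M' u1) = 1" and M'2: "\<forall>u\<in>N-{u1}. card (M' u) = 2" and cK: "c \<in> K"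
      and c1: "card {u\<in>N. c \<in> M' u} = 1"
      by blast
    obtain u where uset: "{w\<in>N. c \<in> M' w} = {u}" using c1 card_1_singleton_iff by (metis One_nat_def)
    have uN: "u \<in> N" and cu: "c \<in> M' u" using uset by auto
    have cnot: "\<And>w. w \<in> N \<Longrightarrow> w \<noteq> u \<Longrightarrow> c \<notin> M' w" using uset by blast
    have cmu: "c \<in> miss E0 col' K u" using M'm uN cu by blast
    have col'sym: "\<And>x y. E0 x y \<Longrightarrow> col' x y = col' y x" using pr' unfolding proper_def by blast
    define E' where "E' x y \<longleftrightarrow> E x y \<and> \<not> (E0 x y \<and> col' x y = c) \<and> \<not> ((x = u \<and> y = v) \<or> (x = v \<and> y = u))" for x y
    have rmvE': "rmv E' v = (\<lambda>x y. E0 x y \<and> col' x y \<noteq> c)"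
      unfolding E'_def rmv_def E0_def by (intro ext) auto
    have E'V: "\<forall>x y. E' x y \<longrightarrow> x \<in> V \<and> y \<in> V" using inV unfolding E'_def by blast
    have E'sym: "\<forall>x y. E' x y \<longrightarrow> E' y x"
    proof (intro allI impI)
      fix x y assume e: "E' x y"
      have "E y x" using e sy unfolding E'_def by blast
      moreover have "E0 y x \<longrightarrow> E0 x y" using E0sym by blast
      moreover have "E0 x y \<longrightarrow> col' y x = col' x y" using col'sym by metis
      ultimately show "E' y x" using e unfolding E'_def by metis
    qed
    have E'irr: "\<forall>x. \<not> E' x x" using irr unfolding E'_def by blast
    have vnot: "\<And>w. \<not> E0 v w" unfolding E0_def rmv_def by blast
    have NE': "{w. E' v w} = N - {u}"
      unfolding E'_def N_def using vnot by auto
    have cE': "card {w. E' v w} = d" using NE' cN' uN finN by simp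
    have prE': "proper (rmv E' v) col' (K - {c})"
      unfolding rmvE' proper_def
    proof (intro conjI allI impI)
      fix x y assume "E0 x y \<and> col' x y \<noteq> c"
      then show "col' x y \<in> K - {c}" "col' x y = col' y x" using pr' unfolding proper_def by auto
    next
      fix x y z assume "E0 x y \<and> col' x y \<noteq> c" "E0 x z \<and> col' x z \<noteq> c" "y \<noteq> z"
      then show "col' x y \<noteq> col' x z" using pr' unfolding proper_def by blast
    qed
    have finK': "finite (K - {c})" using finK by simp
    have dK': "d \<le> card (K - {c})" using dK cK finK by simp
    have miss_eq: "\<And>w. miss (rmv E' v) col' (K - {c}) w = miss E0 col' K w - {c}"
      unfolding rmvE' miss_def colors_def by auto
    have misE': "\<forall>w. E' v w \<longrightarrow> 1 \<le> card (miss (rmv E' v) col' (K - {c}) w) \<and>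
          (w \<noteq> u1 \<longrightarrow> 2 \<le> card (miss (rmv E' v) col' (K - {c}) w))"
    proof (intro allI impI)
      fix w assume "E' v w"
      then have wN: "w \<in> N - {u}" using NE' by blast
      have sub: "M' w \<subseteq> miss (rmv E' v) col' (K - {c}) w"
        using M'm wN cnot[of w] unfolding miss_eq by blast
      have fm: "finite (miss (rmv E' v) col' (K - {c}) w)" unfolding miss_def using finK' by simp
      have "card (M' w) \<le> card (miss (rmv E' v) col' (K - {c}) w)" by (rule card_mono[OF fm sub])
      moreover have "1 \<le> card (M' w) \<and> (w \<noteq> u1 \<longrightarrow> 2 \<le> card (M' w))"
        using M'u1 M'2 wN by (cases "w = u1") auto
      ultimately show "1 \<le> card (miss (rmv E' v) col' (K - {c}) w) \<and>
          (w \<noteq> u1 \<longrightarrow> 2 \<le> card (miss (rmv E' v) col' (K - {c}) w))" by linarith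
    qed
    obtain col2 where pr2: "proper E' col2 (K - {c})"
      using Suc.IH[rule_format, OF fin E'V[rule_format] E'sym[rule_format] E'irr[rule_format] cE' prE' finK' dK' misE'[rule_format]] by blast
    define colF where "colF x y = (if E' x y then col2 x y else c)" for x y
    have "proper E colF K"
      unfolding proper_def
    proof (intro conjI allI impI)
      fix x y assume e: "E x y"
      show "colF x y \<in> K" using pr2 cK unfolding colF_def proper_def by auto
      show "colF x y = colF y x"
      proof (cases "E' x y")
        case True
        then have "E' y x" using E'sym by blast
        then show ?thesis using True pr2 unfolding colF_def proper_def by metis
      next
        case False
        then have "\<not> E' y x" using E'sym by blast
        then show ?thesis using False unfolding colF_def by simp
      qed
    next
      fix x y z assume exy: "E x y" and exz: "E x z" and yz: "y \<noteq> z"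
      show "colF x y \<noteq> colF x z"
      proof (cases "E' x y")
        case ty: True
        show ?thesis
        proof (cases "E' x z")
          case True
          then show ?thesis using ty pr2 yz unfolding colF_def proper_def by metis
        next
          case False
          have "col2 x y \<in> K - {c}" using pr2 ty unfolding proper_def by blast
          then show ?thesis using ty False unfolding colF_def by auto
        qed
      next
        case fy: False
        show ?thesis
        proof (cases "E' x z")
          case True
          have "col2 x z \<in> K - {c}" using pr2 True unfolding proper_def by blast
          then show ?thesis using fy True unfolding colF_def by auto
        next
          case fz: False
          have cy: "(E0 x y \<and> col' x y = c) \<or> (x = u \<and> y = v) \<or> (x = v \<and> y = u)"
            using fy exy unfolding E'_def by blast
          have cz: "(E0 x z \<and> col' x z = c) \<or> (x = u \<and> z = v) \<or> (x = v \<and> z = u)"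
            using fz exz unfolding E'_def by blast
          have nocu: "\<And>w. E0 u w \<Longrightarrow> col' u w \<noteq> c"
            using cmu unfolding miss_def colors_def by blast
          have False
            using cy cz yz vnot nocu pr' unfolding proper_def by metis
          then show ?thesis ..
        qed
      qed
    qed
    then show "\<exists>col'. proper E col' K" by blast
  qed
qed

lemma vizing_aux:
  assumes "finite V"
  shows "\<forall>E. (\<forall>x y. E x y \<longrightarrow> x \<in> V \<and> y \<in> V) \<longrightarrow> (\<forall>x y. E x y \<longrightarrow> E y x) \<longrightarrow>
     (\<forall>x. \<not> E x x) \<longrightarrow> (\<forall>x. card {y. E x y} \<le> D) \<longrightarrow> (\<exists>col. proper E col {..D})"
  using assms
proof (induction V rule: finite_induct)
  case empty
  show ?case
  proof (intro allI impI)
    fix E :: "nat \<Rightarrow> nat \<Rightarrow> bool" assume "\<forall>x y. E x y \<longrightarrow> x \<in> {} \<and> y \<in> {}"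
    then have "\<And>x y. \<not> E x y" by blast
    then have "proper E (\<lambda>x y. 0) {..D}" unfolding proper_def by blast
    then show "\<exists>col. proper E col {..D}" by blast
  qed
next
  case (insert v F)
  show ?case
  proof (intro allI impI)
    fix E :: "nat \<Rightarrow> nat \<Rightarrow> bool"
    assume inV: "\<forall>x y. E x y \<longrightarrow> x \<in> insert v F \<and> y \<in> insert v F" and sy: "\<forall>x y. E x y \<longrightarrow> E y x"
      and irr: "\<forall>x. \<not> E x x" and deg: "\<forall>x. card {y. E x y} \<le> D"
    have finV: "finite (insert v F)" using insert.hyps by simp
    have finE: "\<And>x. finite {y. E x y}"
      using inV finV by (metis (no_types, lifting) mem_Collect_eq rev_finite_subset subsetI)
    define E0 where "E0 = rmv E v"
    have E0F: "\<forall>x y. E0 x y \<longrightarrow> x \<in> F \<and> y \<in> F" using inV unfolding E0_def rmv_def by blast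
    have E0s: "\<forall>x y. E0 x y \<longrightarrow> E0 y x" using sy unfolding E0_def rmv_def by blast
    have E0i: "\<forall>x. \<not> E0 x x" using irr unfolding E0_def rmv_def by blast
    have E0d: "\<forall>x. card {y. E0 x y} \<le> D"
    proof
      fix x
      have sub: "{y. E0 x y} \<subseteq> {y. E x y}" unfolding E0_def rmv_def by blast
      have "card {y. E0 x y} \<le> card {y. E x y}" by (rule card_mono[OF finE sub])
      moreover have "card {y. E x y} \<le> D" using deg by blast
      ultimately show "card {y. E0 x y} \<le> D" by (rule le_trans)
    qed
    have "\<exists>col. proper E0 col {..D}" using insert.IH E0F E0s E0i E0d by blast
    then obtain col where prc: "proper E0 col {..D}" by blast
    have dK: "card {u. E v u} \<le> card {..D}" using deg[rule_format, of v] by simp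
    have mis: "\<forall>u. E v u \<longrightarrow> 1 \<le> card (miss (rmv E v) col {..D} u) \<and> (u \<noteq> 0 \<longrightarrow> 2 \<le> card (miss (rmv E v) col {..D} u))"
    proof (intro allI impI)
      fix u assume evu: "E v u"
      have euv: "E u v" using sy evu by blast
      have sub: "{y. E0 u y} \<subseteq> {y. E u y} - {v}" unfolding E0_def rmv_def by blast
      have "card {y. E0 u y} \<le> card ({y. E u y} - {v})" using card_mono[OF _ sub] finE by simp
      also have "\<dots> = card {y. E u y} - 1" using euv finE by simp
      finally have c1: "card {y. E0 u y} \<le> card {y. E u y} - 1" .
      have vin: "v \<in> {y. E u y}" using euv by simp
      have "{y. E u y} \<noteq> {}" using vin by blast
      then have "card {y. E u y} \<ge> 1" using card_gt_0_iff[of "{y. E u y}"] finE[of u] by linarith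
      moreover have "card {y. E u y} \<le> D" using deg by blast
      ultimately have c2: "card {y. E0 u y} \<le> D - 1" using c1 by linarith
      have finE0: "finite {y. E0 u y}" using finite_subset[OF _ finE[of u]] sub by blast
      have "card (colors E0 col u) \<le> card {y. E0 u y}" unfolding colors_def by (rule card_image_le[OF finE0])
      then have c3: "card (colors E0 col u) \<le> D - 1" using c2 by linarith
      have D1: "D \<ge> 1" using \<open>card {y. E u y} \<ge> 1\<close> \<open>card {y. E u y} \<le> D\<close> by linarith
      have fc: "finite (colors E0 col u)" unfolding colors_def using finE0 by simp
      have "card {..D} - card (colors E0 col u) \<le> card ({..D} - colors E0 col u)"
        by (rule diff_card_le_card_Diff[OF fc])
      then have "2 \<le> card (miss E0 col {..D} u)" unfolding miss_def using c3 D1 by simp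
      then show "1 \<le> card (miss (rmv E v) col {..D} u) \<and> (u \<noteq> 0 \<longrightarrow> 2 \<le> card (miss (rmv E v) col {..D} u))"
        unfolding E0_def by simp
    qed
    show "\<exists>col. proper E col {..D}"
      using extend[rule_format, OF finV inV[rule_format] sy[rule_format] irr[rule_format] HOL.refl prc[unfolded E0_def] _ dK mis[rule_format]]
      by simp
  qed
qed


definition subG :: "lgraph \<Rightarrow> nat set \<Rightarrow> lgraph" where
  "subG G S = G\<lparr>adj := (\<lambda>u x. adj G u x \<and> (u \<in> S \<or> x \<in> S))\<rparr>"

definition wS :: "nat set \<Rightarrow> nat \<Rightarrow> nat \<Rightarrow> real" where
  "wS S u x = (if u \<in> S then 1 else 0) + (if x \<in> S then 1 else 0)"

lemma subG_verts[simp]: "verts (subG G S) = verts G" unfolding subG_def by simp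
lemma subG_adj: "adj (subG G S) u x \<longleftrightarrow> adj G u x \<and> (u \<in> S \<or> x \<in> S)" unfolding subG_def by simp

lemma reach_verts: "reach G k v u \<Longrightarrow> v \<in> verts G \<and> u \<in> verts G"
  by (induction rule: reach.induct) auto

lemma reach_plus: "reach G k v u \<Longrightarrow> reach G (k + m) v u"
  by (induction m) (auto intro: reach.mono)

lemma reach_le: "reach G k v u \<Longrightarrow> k \<le> T \<Longrightarrow> reach G T v u"
  using reach_plus[of G k v u "T - k"] by simp

lemma reach_sub: "reach (subG G S) k v u \<Longrightarrow> reach G k v u"
proof (induction rule: reach.induct)
  case (refl v) then show ?case by (simp add: reach.refl)
next
  case (mono k v u) show ?case using mono.IH by (rule reach.mono)
next
  case (step k v u x) then show ?case using reach.step subG_adj by (metis subG_verts)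
qed

lemma sview_sym: "same_sview T G S H S' v \<Longrightarrow> same_sview T H S' G S v"
  unfolding same_sview_def same_view_def by auto

lemma reach_transfer:
  assumes sv: "same_sview T G S H S' v"
  shows "reach (subG G S) k w x \<Longrightarrow> w = v \<Longrightarrow> k \<le> T \<Longrightarrow> reach (subG H S') k w x"
proof (induction rule: reach.induct)
  case (refl w)
  have "reach G 0 w w" using refl by (simp add: reach.refl)
  then have "w \<in> ball G T w" unfolding ball_def using reach_le by blast
  then have "w \<in> ball H T w" using sv refl(2) unfolding same_sview_def same_view_def by simp
  then have "w \<in> verts H" unfolding ball_def using reach_verts by blast
  then show ?case by (simp add: reach.refl)
next
  case (mono k w u)
  then show ?case by (simp add: reach.mono)
next
  case (step k w u x)
  have IH: "reach (subG H S') k w u" using step by simp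
  have ru: "reach G k w u" using reach_sub step(1) by blast
  then have ub: "u \<in> ball G T w" unfolding ball_def using reach_le step(6) by simp
  have "reach G (Suc k) w x" using reach.step[OF ru] step(2,3) subG_adj by (metis subG_verts)
  then have xb: "x \<in> ball G T w" unfolding ball_def using reach_le step(6) by blast
  have vw: "w = v" using step(5) .
  have "adj G u x = adj H u x" "u \<in> S \<longleftrightarrow> u \<in> S'" "x \<in> S \<longleftrightarrow> x \<in> S'"
    using sv ub xb vw unfolding same_sview_def same_view_def by auto
  then have "adj (subG H S') u x" using step(2) subG_adj by metis
  moreover have "x \<in> ball H T w" using xb sv vw unfolding same_sview_def same_view_def by simp
  then have "x \<in> verts H" unfolding ball_def using reach_verts by blast
  ultimately show ?case using IH reach.step by (metis subG_verts)
qed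


lemma ball_sub: "ball (subG G S) T v \<subseteq> ball G T v"
  unfolding ball_def using reach_sub by blast

lemma wview:
  assumes sv: "same_sview T G S H S' v"
  shows "same_wview T (subG G S) (wS S) (subG H S') (wS S') v"
proof -
  have sv': "same_sview T H S' G S v" using sview_sym[OF sv] .
  have b1: "ball (subG G S) T v \<subseteq> ball (subG H S') T v"
    unfolding ball_def using reach_transfer[OF sv] by blast
  have b2: "ball (subG H S') T v \<subseteq> ball (subG G S) T v"
    unfolding ball_def using reach_transfer[OF sv'] by blast
  have beq: "ball (subG G S) T v = ball (subG H S') T v" using b1 b2 by blast
  have agree: "\<And>u. u \<in> ball (subG G S) T v \<Longrightarrow> u \<in> ball G T v" using ball_sub by blast
  have adjeq: "\<forall>u\<in>ball (subG G S) T v. \<forall>x\<in>ball (subG G S) T v. adj (subG G S) u x = adj (subG H S') u x"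
  proof (intro ballI)
    fix u x assume "u \<in> ball (subG G S) T v" "x \<in> ball (subG G S) T v"
    then have "u \<in> ball G T v" "x \<in> ball G T v" using agree by auto
    then have "adj G u x = adj H u x" "u \<in> S \<longleftrightarrow> u \<in> S'" "x \<in> S \<longleftrightarrow> x \<in> S'"
      using sv unfolding same_sview_def same_view_def by auto
    then show "adj (subG G S) u x = adj (subG H S') u x" unfolding subG_adj by simp
  qed
  have weq: "\<forall>u\<in>ball (subG G S) T v. \<forall>x\<in>ball (subG G S) T v. adj (subG G S) u x \<longrightarrow> wS S u x = wS S' u x"
  proof (intro ballI impI)
    fix u x assume "u \<in> ball (subG G S) T v" "x \<in> ball (subG G S) T v"
    then have "u \<in> ball G T v" "x \<in> ball G T v" using agree by auto
    then have "u \<in> S \<longleftrightarrow> u \<in> S'" "x \<in> S \<longleftrightarrow> x \<in> S'"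
      using sv unfolding same_sview_def same_view_def by auto
    then show "wS S u x = wS S' u x" unfolding wS_def by simp
  qed
  show ?thesis unfolding same_wview_def same_view_def using beq adjeq weq by blast
qed

lemma deg_subG_le:
  assumes "wf_graph n \<Delta> N G"
  shows "deg (subG G S) v \<le> deg G v"
proof -
  have fin: "finite {u. adj G v u}"
    using assms unfolding wf_graph_def by (metis (no_types, lifting) mem_Collect_eq rev_finite_subset subsetI)
  have "{u. adj (subG G S) v u} \<subseteq> {u. adj G v u}" unfolding subG_adj by blast
  then show ?thesis unfolding deg_def using card_mono[OF fin] by blast
qed

lemma wf_subG:
  assumes "wf_graph n \<Delta> N G"
  shows "wf_graph n \<Delta> N (subG G S)"
proof -
  have "\<forall>v\<in>verts G. deg (subG G S) v \<le> \<Delta>"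
    using assms deg_subG_le[OF assms] unfolding wf_graph_def by (meson le_trans)
  then show ?thesis using assms unfolding wf_graph_def subG_adj by auto
qed

lemma wfw_subG:
  assumes wf: "wf_graph n \<Delta> N G" and c1: "c \<ge> 1"
  shows "wf_weights n c (subG G S) (wS S)"
  unfolding wf_weights_def
proof (intro conjI allI impI)
  fix u x assume e: "adj (subG G S) u x"
  then have "u \<in> S \<or> x \<in> S" using subG_adj by blast
  then show "wS S u x > 0" unfolding wS_def by auto
  show "wS S u x = wS S x u" unfolding wS_def by simp
next
  fix u x y z assume e1: "adj (subG G S) u x" and e2: "adj (subG G S) y z"
  have g: "adj G u x" using e1 subG_adj by blast
  have "u \<in> verts G" "x \<in> verts G" "u \<noteq> x" using g wf unfolding wf_graph_def by auto
  then have "card {u, x} \<le> card (verts G)" using wf unfolding wf_graph_def by (metis card_mono empty_subsetI insert_subset)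
  then have n2: "n \<ge> 2" using wf \<open>u \<noteq> x\<close> unfolding wf_graph_def by simp
  have pw: "real n ^ 1 \<le> real n ^ c" by (rule power_increasing[OF c1]) (use n2 in simp)
  have rn: "(2::real) \<le> real n" using n2 by simp
  have pn: "2 \<le> real n ^ c" using order_trans[OF rn pw[unfolded power_one_right]] .
  have w1: "wS S u x \<le> 2" unfolding wS_def by auto
  have "y \<in> S \<or> z \<in> S" using e2 subG_adj by blast
  then have w2: "1 \<le> wS S y z" unfolding wS_def by auto
  have "2 * 1 \<le> real n ^ c * wS S y z" using pn w2 by (intro mult_mono) auto
  then show "wS S u x \<le> real n ^ c * wS S y z" using w1 by linarith
qed

lemma sum_ind_real: "finite A \<Longrightarrow> (\<Sum>a\<in>A. if P a then (1::real) else 0) = real (card {a\<in>A. P a})"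
proof -
  assume f: "finite A"
  have "(\<Sum>a\<in>A. if P a then (1::real) else 0) = (\<Sum>a\<in>{a\<in>A. P a}. (1::real))"
    by (rule sum.inter_filter[OF f, symmetric])
  also have "\<dots> = real (card {a\<in>A. P a})" by simp
  finally show ?thesis .
qed

lemma mweight_hits:
  assumes fin: "finite (verts G)" and adjv: "\<And>u x. adj G u x \<Longrightarrow> x \<in> verts G"
    and mo: "matching_out G M" and SV: "S \<subseteq> verts G"
  shows "mweight G (wS S) M = real (card {v\<in>S. M v \<noteq> None})"
proof -
  define V where "V = verts G"
  define Mt where "Mt = {u\<in>V. M u \<noteq> None}"
  define p where "p u = the (M u)" for u
  have finMt: "finite Mt" using fin unfolding Mt_def V_def by simp
  have pM: "\<And>u. u \<in> Mt \<Longrightarrow> M u = Some (p u)" unfolding Mt_def p_def by auto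
  have pMt: "\<And>u. u \<in> Mt \<Longrightarrow> p u \<in> Mt \<and> p (p u) = u"
  proof -
    fix u assume uM: "u \<in> Mt"
    then have uV: "u \<in> verts G" unfolding Mt_def V_def by simp
    have "adj G u (p u) \<and> M (p u) = Some u" using mo uV pM[OF uM] unfolding matching_out_def by blast
    then show "p u \<in> Mt \<and> p (p u) = u" using adjv unfolding Mt_def V_def p_def by auto
  qed
  have split: "(case M u of None \<Rightarrow> 0 | Some x \<Rightarrow> wS S u x) =
      (if u \<in> Mt \<and> u \<in> S then 1 else 0) + (if u \<in> Mt \<and> p u \<in> S then (1::real) else 0)"
    if uV: "u \<in> V" for u
  proof (cases "M u")
    case None then show ?thesis unfolding Mt_def by simp
  next
    case (Some x) then show ?thesis using uV unfolding Mt_def p_def wS_def by simp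
  qed
  have s1: "(\<Sum>u\<in>V. if u \<in> Mt \<and> u \<in> S then 1 else (0::real)) = real (card {v\<in>S. M v \<noteq> None})"
  proof -
    have "{u\<in>V. u \<in> Mt \<and> u \<in> S} = {v\<in>S. M v \<noteq> None}" using SV unfolding Mt_def V_def by auto
    then show ?thesis using sum_ind_real[of V "\<lambda>u. u \<in> Mt \<and> u \<in> S"] fin unfolding V_def by simp
  qed
  have s2: "(\<Sum>u\<in>V. if u \<in> Mt \<and> p u \<in> S then 1 else (0::real)) = real (card {v\<in>S. M v \<noteq> None})"
  proof -
    have MtV: "Mt \<subseteq> V" unfolding Mt_def by auto
    have "(\<Sum>u\<in>V. if u \<in> Mt \<and> p u \<in> S then 1 else (0::real)) = (\<Sum>u\<in>Mt. if p u \<in> S then 1 else (0::real))"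
    proof -
      have "(\<Sum>u\<in>V. if u \<in> Mt \<and> p u \<in> S then 1 else (0::real)) = (\<Sum>u\<in>V. if u \<in> Mt then (if p u \<in> S then 1 else 0) else (0::real))"
        by (rule sum.cong) auto
      also have "\<dots> = (\<Sum>u\<in>Mt. if p u \<in> S then 1 else (0::real))"
        using sum.inter_filter[of V "\<lambda>u. if p u \<in> S then 1 else (0::real)" "\<lambda>u. u \<in> Mt"] fin MtV
        unfolding V_def by (simp add: Int_absorb1 Collect_conj_eq inf.absorb_iff2 Int_def[symmetric])
      finally show ?thesis .
    qed
    also have "\<dots> = (\<Sum>u\<in>Mt. if u \<in> S then 1 else (0::real))"
      by (rule sum.reindex_bij_witness[of Mt p p]) (use pMt in auto)
    also have "\<dots> = real (card {u\<in>Mt. u \<in> S})" by (rule sum_ind_real[OF finMt])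
    also have "{u\<in>Mt. u \<in> S} = {v\<in>S. M v \<noteq> None}" using SV unfolding Mt_def V_def by auto
    finally show ?thesis .
  qed
  have "(\<Sum>u\<in>verts G. case M u of None \<Rightarrow> 0 | Some x \<Rightarrow> wS S u x) =
      (\<Sum>u\<in>V. (if u \<in> Mt \<and> u \<in> S then 1 else 0) + (if u \<in> Mt \<and> p u \<in> S then (1::real) else 0))"
    unfolding V_def by (rule sum.cong[OF HOL.refl]) (use split in \<open>simp add: V_def\<close>)
  also have "\<dots> = 2 * real (card {v\<in>S. M v \<noteq> None})" using s1 s2 by (simp add: sum.distrib)
  finally show ?thesis unfolding mweight_def by simp
qed


lemma maxdeg_ge: "finite (verts G) \<Longrightarrow> x \<in> verts G \<Longrightarrow> deg G x \<le> maxdeg G"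
  unfolding maxdeg_def by (rule Max_ge) auto

lemma good_matching:
  assumes wf: "wf_graph n \<Delta> N G" and SV: "S \<subseteq> verts G" and dS: "\<forall>v\<in>S. deg G v \<ge> \<delta>"
  shows "\<exists>M. matching_out (subG G S) M \<and>
     real \<delta> * real (card S) / real (maxdeg G + 1) \<le> real (card {v\<in>S. M v \<noteq> None})"
proof -
  define E where "E = adj (subG G S)"
  define D where "D = maxdeg G"
  define K where "K = {..D}"
  have finV: "finite (verts G)" using wf unfolding wf_graph_def by blast
  have Gadj: "\<And>u x. adj G u x \<Longrightarrow> u \<in> verts G \<and> x \<in> verts G \<and> u \<noteq> x \<and> adj G x u"
    using wf unfolding wf_graph_def by blast
  have EV: "\<forall>x y. E x y \<longrightarrow> x \<in> verts G \<and> y \<in> verts G" using Gadj unfolding E_def subG_adj by blast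
  have Esym: "\<forall>x y. E x y \<longrightarrow> E y x" using Gadj unfolding E_def subG_adj by blast
  have Eirr: "\<forall>x. \<not> E x x" using Gadj unfolding E_def subG_adj by blast
  have finE: "\<And>x. finite {y. E x y}"
    using EV finV by (metis (no_types, lifting) mem_Collect_eq rev_finite_subset subsetI)
  have Edeg: "\<forall>x. card {y. E x y} \<le> D"
  proof
    fix x show "card {y. E x y} \<le> D"
    proof (cases "x \<in> verts G")
      case True
      have "card {y. E x y} = deg (subG G S) x" unfolding E_def deg_def by simp
      also have "\<dots> \<le> deg G x" by (rule deg_subG_le[OF wf])
      also have "\<dots> \<le> D" unfolding D_def by (rule maxdeg_ge[OF finV True])
      finally show ?thesis .
    next
      case False
      then have "{y. E x y} = {}" using EV by blast
      then show ?thesis by simp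
    qed
  qed
  have "\<exists>col. proper E col {..D}"
    using vizing_aux[OF finV] EV Esym Eirr Edeg by blast
  then obtain col where pr: "proper E col K" unfolding K_def by blast
  have uniq: "\<And>u x x' c. E u x \<Longrightarrow> col u x = c \<Longrightarrow> E u x' \<Longrightarrow> col u x' = c \<Longrightarrow> x = x'"
    using proper_unique[OF pr] by metis
  define Mc where "Mc c u = (if \<exists>x. E u x \<and> col u x = c then Some (THE x. E u x \<and> col u x = c) else None)" for c u
  have Mc_some: "\<And>c u x. Mc c u = Some x \<longleftrightarrow> E u x \<and> col u x = c"
  proof -
    fix c u x
    show "Mc c u = Some x \<longleftrightarrow> E u x \<and> col u x = c"
    proof
      assume a: "Mc c u = Some x"
      then have ex: "\<exists>x. E u x \<and> col u x = c" unfolding Mc_def by (metis option.distinct(1))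
      then have "x = (THE x. E u x \<and> col u x = c)" using a unfolding Mc_def by simp
      moreover have "E u (THE x. E u x \<and> col u x = c) \<and> col u (THE x. E u x \<and> col u x = c) = c"
      proof -
        have "\<exists>!x. E u x \<and> col u x = c" using ex uniq by blast
        then show ?thesis by (rule theI')
      qed
      ultimately show "E u x \<and> col u x = c" by simp
    next
      assume a: "E u x \<and> col u x = c"
      then have "(THE x. E u x \<and> col u x = c) = x" using uniq by blast
      then show "Mc c u = Some x" using a unfolding Mc_def by auto
    qed
  qed
  have colsym: "\<And>x y. E x y \<Longrightarrow> col x y = col y x" using pr unfolding proper_def by blast
  have mo: "\<And>c. matching_out (subG G S) (Mc c)"
    unfolding matching_out_def
  proof (intro ballI allI impI)
    fix c u x assume "Mc c u = Some x"
    then have a: "E u x" "col u x = c" using Mc_some by auto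
    then have "E x u" "col x u = c" using Esym colsym by auto
    then show "adj (subG G S) u x \<and> Mc c x = Some u" using a Mc_some unfolding E_def by blast
  qed
  have hits: "\<And>c. {v\<in>S. Mc c v \<noteq> None} = {v\<in>S. c \<in> colors E col v}"
  proof -
    fix c
    have "\<And>v. Mc c v \<noteq> None \<longleftrightarrow> c \<in> colors E col v"
    proof -
      fix v
      have "Mc c v \<noteq> None \<longleftrightarrow> (\<exists>x. Mc c v = Some x)" by simp
      also have "\<dots> \<longleftrightarrow> (\<exists>x. E v x \<and> col v x = c)" using Mc_some by simp
      also have "\<dots> \<longleftrightarrow> c \<in> colors E col v" unfolding colors_def by blast
      finally show "Mc c v \<noteq> None \<longleftrightarrow> c \<in> colors E col v" .
    qed
    then show "{v\<in>S. Mc c v \<noteq> None} = {v\<in>S. c \<in> colors E col v}" by simp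
  qed
  have finS: "finite S" using finV SV finite_subset by blast
  have finK: "finite K" unfolding K_def by simp
  have colK: "\<forall>v\<in>S. colors E col v \<subseteq> K" using pr unfolding proper_def colors_def by blast
  have cardcol: "\<And>v. v \<in> S \<Longrightarrow> card (colors E col v) \<ge> \<delta>"
  proof -
    fix v assume vS: "v \<in> S"
    have "inj_on (col v) {y. E v y}" unfolding inj_on_def using uniq by blast
    then have "card (colors E col v) = card {y. E v y}" unfolding colors_def by (rule card_image)
    also have "{y. E v y} = {y. adj G v y}" unfolding E_def subG_adj using vS by blast
    finally show "card (colors E col v) \<ge> \<delta>" using dS vS unfolding deg_def by simp
  qed
  have "(\<Sum>c\<in>K. card {v\<in>S. c \<in> colors E col v}) = (\<Sum>v\<in>S. card (colors E col v))"
    by (rule dbl[OF finS finK colK])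
  also have "\<dots> \<ge> card S * \<delta>" using sum_bounded_below[of S \<delta> "\<lambda>v. card (colors E col v)"] cardcol by simp
  finally have sumge: "(\<Sum>c\<in>K. card {v\<in>S. Mc c v \<noteq> None}) \<ge> card S * \<delta>" using hits by simp
  have cK: "card K = D + 1" unfolding K_def by simp
  have "\<exists>c\<in>K. card {v\<in>S. Mc c v \<noteq> None} * (D + 1) \<ge> card S * \<delta>"
  proof (rule ccontr)
    assume "\<not> (\<exists>c\<in>K. card {v\<in>S. Mc c v \<noteq> None} * (D + 1) \<ge> card S * \<delta>)"
    then have lt: "\<forall>c\<in>K. card {v\<in>S. Mc c v \<noteq> None} * (D + 1) < card S * \<delta>" by auto
    have Kne: "K \<noteq> {}" unfolding K_def by auto
    have "(\<Sum>c\<in>K. card {v\<in>S. Mc c v \<noteq> None} * (D + 1)) < (\<Sum>c\<in>K. card S * \<delta>)"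
      by (rule sum_strict_mono[OF finK Kne]) (use lt in blast)
    also have "\<dots> = (card S * \<delta>) * (D + 1)" using cK by simp
    finally have "(\<Sum>c\<in>K. card {v\<in>S. Mc c v \<noteq> None}) * (D + 1) < (card S * \<delta>) * (D + 1)"
      by (simp only: sum_distrib_right)
    then have "(\<Sum>c\<in>K. card {v\<in>S. Mc c v \<noteq> None}) < card S * \<delta>" by (rule mult_right_less_imp_less) simp
    then show False using sumge by simp
  qed
  then obtain c where "card {v\<in>S. Mc c v \<noteq> None} * (D + 1) \<ge> card S * \<delta>" by blast
  then have "real (card S * \<delta>) \<le> real (card {v\<in>S. Mc c v \<noteq> None} * (D + 1))" by linarith
  moreover have "real (card S * \<delta>) = real \<delta> * real (card S)" by simp
  moreover have "real (card {v\<in>S. Mc c v \<noteq> None} * (D + 1)) = real (card {v\<in>S. Mc c v \<noteq> None}) * real (D + 1)"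
    by (simp only: of_nat_mult)
  ultimately have "real \<delta> * real (card S) \<le> real (card {v\<in>S. Mc c v \<noteq> None}) * real (D + 1)"
    by linarith
  then have "real \<delta> * real (card S) / real (D + 1) \<le> real (card {v\<in>S. Mc c v \<noteq> None})"
    using pos_divide_le_eq[of "real (D + 1)"] by (metis of_nat_0_less_iff zero_less_Suc Suc_eq_plus1)
  then show ?thesis using mo unfolding D_def by blast
qed


theorem lemma2p6:
  fixes n \<Delta> N c T :: nat and \<epsilon> :: real
    and A :: "lgraph \<Rightarrow> (nat \<Rightarrow> nat \<Rightarrow> real) \<Rightarrow> nat \<Rightarrow> nat option"
  assumes "\<epsilon> > 0" and "c \<ge> 1"
    and "AM_algorithm n \<Delta> N c \<epsilon> T A"
  shows "\<exists>B. local_s_alg n \<Delta> N T B \<and>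
    (\<forall>G S \<delta>. wf_graph n \<Delta> N G \<and> S \<subseteq> verts G \<and> (\<forall>v\<in>S. deg G v \<ge> \<delta>) \<longrightarrow>
        matching_out G (B G S) \<and>
        real (card {v\<in>S. B G S v \<noteq> None})
          \<ge> (1 - \<epsilon>) * (real \<delta> / real (maxdeg G + 1)) * real (card S))"
proof -
  have loc: "local_w_alg n \<Delta> N c T A" using assms(3) unfolding AM_algorithm_def by blast
  have prp: "\<And>G w. wf_graph n \<Delta> N G \<Longrightarrow> wf_weights n c G w \<Longrightarrow>
        matching_out G (A G w) \<and> (\<forall>M. matching_out G M \<longrightarrow> mweight G w (A G w) \<ge> (1 - \<epsilon>) * mweight G w M)"
    using assms(3) unfolding AM_algorithm_def by blast
  define B where "B G S = A (subG G S) (wS S)" for G S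
  have L: "local_s_alg n \<Delta> N T B"
    unfolding local_s_alg_def
  proof (intro allI impI)
    fix G S H S' v
    assume a: "wf_graph n \<Delta> N G \<and> S \<subseteq> verts G \<and> wf_graph n \<Delta> N H \<and> S' \<subseteq> verts H \<and>
        v \<in> verts G \<and> same_sview T G S H S' v"
    have w1: "wf_graph n \<Delta> N (subG G S)" using wf_subG a by blast
    have w2: "wf_graph n \<Delta> N (subG H S')" using wf_subG a by blast
    have w3: "wf_weights n c (subG G S) (wS S)" using wfw_subG assms(2) a by blast
    have w4: "wf_weights n c (subG H S') (wS S')" using wfw_subG assms(2) a by blast
    have w5: "v \<in> verts (subG G S)" using a by simp
    have w6: "same_wview T (subG G S) (wS S) (subG H S') (wS S') v" using wview a by blast
    show "B G S v = B H S' v" unfolding B_def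
      using loc w1 w2 w3 w4 w5 w6 unfolding local_w_alg_def by blast
  qed
  have R: "\<forall>G S \<delta>. wf_graph n \<Delta> N G \<and> S \<subseteq> verts G \<and> (\<forall>v\<in>S. deg G v \<ge> \<delta>) \<longrightarrow>
        matching_out G (B G S) \<and>
        real (card {v\<in>S. B G S v \<noteq> None})
          \<ge> (1 - \<epsilon>) * (real \<delta> / real (maxdeg G + 1)) * real (card S)"
  proof (intro allI impI)
    fix G S \<delta> assume a: "wf_graph n \<Delta> N G \<and> S \<subseteq> verts G \<and> (\<forall>v\<in>S. deg G v \<ge> \<delta>)"
    have wf: "wf_graph n \<Delta> N G" and SV: "S \<subseteq> verts G" and dS: "\<forall>v\<in>S. deg G v \<ge> \<delta>" using a by auto
    have w1: "wf_graph n \<Delta> N (subG G S)" using wf_subG wf by blast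
    have w3: "wf_weights n c (subG G S) (wS S)" using wfw_subG assms(2) wf by blast
    have P: "matching_out (subG G S) (B G S) \<and> (\<forall>M. matching_out (subG G S) M \<longrightarrow> mweight (subG G S) (wS S) (B G S) \<ge> (1 - \<epsilon>) * mweight (subG G S) (wS S) M)"
      unfolding B_def by (rule prp[OF w1 w3])
    have pA: "matching_out (subG G S) (B G S)" using P by (rule conjunct1)
    have apx: "\<forall>M. matching_out (subG G S) M \<longrightarrow> mweight (subG G S) (wS S) (B G S) \<ge> (1 - \<epsilon>) * mweight (subG G S) (wS S) M"
      using P by (rule conjunct2)
    have mG: "matching_out G (B G S)" using pA unfolding matching_out_def subG_adj subG_verts by blast
    have finV: "finite (verts (subG G S))" using wf unfolding wf_graph_def by simp
    have adjv: "\<And>u x. adj (subG G S) u x \<Longrightarrow> x \<in> verts (subG G S)"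
      using wf unfolding wf_graph_def subG_adj by auto
    have SV': "S \<subseteq> verts (subG G S)" using SV by simp
    obtain M where mM: "matching_out (subG G S) M"
      and hM: "real \<delta> * real (card S) / real (maxdeg G + 1) \<le> real (card {v\<in>S. M v \<noteq> None})"
      using good_matching[OF wf SV dS] by blast
    have eA: "mweight (subG G S) (wS S) (B G S) = real (card {v\<in>S. B G S v \<noteq> None})"
      by (rule mweight_hits[OF finV adjv pA SV'])
    have eM: "mweight (subG G S) (wS S) M = real (card {v\<in>S. M v \<noteq> None})"
      by (rule mweight_hits[OF finV adjv mM SV'])
    have ineq: "real (card {v\<in>S. B G S v \<noteq> None}) \<ge> (1 - \<epsilon>) * real (card {v\<in>S. M v \<noteq> None})"
      using apx mM eA eM by metis
    have eqx: "(1 - \<epsilon>) * (real \<delta> / real (maxdeg G + 1)) * real (card S) =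
        (1 - \<epsilon>) * (real \<delta> * real (card S) / real (maxdeg G + 1))" by simp
    have "real (card {v\<in>S. B G S v \<noteq> None}) \<ge> (1 - \<epsilon>) * (real \<delta> * real (card S) / real (maxdeg G + 1))"
    proof (cases "\<epsilon> \<le> 1")
      case True
      then have "(1 - \<epsilon>) * (real \<delta> * real (card S) / real (maxdeg G + 1)) \<le> (1 - \<epsilon>) * real (card {v\<in>S. M v \<noteq> None})"
        using hM by (intro mult_left_mono) auto
      then show ?thesis using ineq by linarith
    next
      case False
      have "0 \<le> real \<delta> * real (card S) / real (maxdeg G + 1)" by simp
      then have "(1 - \<epsilon>) * (real \<delta> * real (card S) / real (maxdeg G + 1)) \<le> 0"
        using False by (intro mult_nonpos_nonneg) auto
      then show ?thesis by simp
    qed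
    then show "matching_out G (B G S) \<and> real (card {v\<in>S. B G S v \<noteq> None})
          \<ge> (1 - \<epsilon>) * (real \<delta> / real (maxdeg G + 1)) * real (card S)"
      using mG eqx by simp
  qed
  show ?thesis using L R by blast
qed


end
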